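(* Let $v_1,\dots,v_m\in\mathbb{C}^d$ with $m$ even, $\sum_{i=1}^m v_iv_i^*=\mathbb{I}$, $\|v_i\|^2=\alpha$ for all $i$, and $\alpha\le \frac{1}{221 d}$ (equivalently $m\ge 221d^2$). Run Algorithm 1 (described in the context) on these vectors, producing matrices $A_0,\dots,A_{m/2}$ and barrier values $u_0,\dots,u_{m/2}$, and set $c_j=u_j-\lambda_{\max}(A_j)$. Then for every $0\le j\le m/2$ we have $c_j\ge 1/3$ and $\kappa(u_j\mathbb{I}-A_j)\le 3/2$.
   Context: Algorithm 1: set $A_0=\mathbf{0}_{d\times d}$, $\mathcal{A}_0=\emptyset$, $\mathcal{B}_0=\{v_1,\dots,v_m\}$, $u_0=1/2$, $\delta_u=\alpha/d$. For $j=0,1,\dots,m/2-1$: set $u_{j+1}=u_j+\delta_u$; choose $v_j\in\mathcal{B}_j$ maximising $\det(u_{j+1}\mathbb{I}-A_j-vv^* )$ over $v\in\mathcal{B}_j$ (ties broken arbitrarily); set $A_{j+1}=A_j+v_jv_j^*$, $\mathcal{A}_{j+1}=\mathcal{A}_j\cup\{v_j\}$, $\mathcal{B}_{j+1}=\mathcal{B}_j\setminus\{v_j\}$. For a Hermitian positive definite matrix $B$, $\kappa(B)=\lambda_{\max}(B)/\lambda_{\min}(B)$ is its condition number. $\mathbb{I}$ is the $d\times d$ identity. *)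

theory Defs
  imports "HOL-Analysis.Analysis"
begin

definition outer :: "complex^'n \<Rightarrow> complex^'n^'n" where
  "outer x = (\<chi> i j. x$i * cnj (x$j))"

definition eigs :: "complex^'n^'n \<Rightarrow> complex set" where
  "eigs A = {c. \<exists>x. x \<noteq> 0 \<and> A *v x = c *s x}"

text \<open>Largest / smallest eigenvalue (meant for Hermitian matrices, whose eigenvalues are real).\<close>
definition lambda_max :: "complex^'n^'n \<Rightarrow> real" where
  "lambda_max A = Max (Re ` eigs A)"

definition lambda_min :: "complex^'n^'n \<Rightarrow> real" where
  "lambda_min A = Min (Re ` eigs A)"

definition cond_num :: "complex^'n^'n \<Rightarrow> real" where
  "cond_num B = lambda_max B / lambda_min B"

text \<open>Algorithm 1. The run is described by the sequence s of chosen indices: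
  at step j the index s j of the vector v_j is picked. A_j and u_j: \<close>
definition alg_A :: "(nat \<Rightarrow> complex^'n) \<Rightarrow> (nat \<Rightarrow> nat) \<Rightarrow> nat \<Rightarrow> complex^'n^'n" where
  "alg_A v s j = (\<Sum>i<j. outer (v (s i)))"

definition alg_u :: "nat \<Rightarrow> real \<Rightarrow> nat \<Rightarrow> real" where
  "alg_u d \<alpha> j = 1/2 + real j * (\<alpha> / real d)"

text \<open>s is a valid run of Algorithm 1 (any tie-breaking) on v_0..v_(m-1).\<close>
definition is_run :: "(nat \<Rightarrow> complex^'n) \<Rightarrow> nat \<Rightarrow> real \<Rightarrow> (nat \<Rightarrow> nat) \<Rightarrow> bool" where
  "is_run v m \<alpha> s \<longleftrightarrow>
     (\<forall>j < m div 2. s j < m \<and> s j \<notin> s ` {..<j} \<and>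
        (\<forall>k < m. k \<notin> s ` {..<j} \<longrightarrow>
           Re (det (mat (complex_of_real (alg_u CARD('n) \<alpha> (Suc j))) - alg_A v s j - outer (v k)))
           \<le> Re (det (mat (complex_of_real (alg_u CARD('n) \<alpha> (Suc j))) - alg_A v s j - outer (v (s j))))))"

end

theory Submission
  imports Defs
begin

definition cadj :: "complex^'n^'m \<Rightarrow> complex^'m^'n" where
  "cadj M = (\<chi> i j. cnj (M$j$i))"

definition cinner :: "complex^'n \<Rightarrow> complex^'n \<Rightarrow> complex" where
  "cinner x y = (\<Sum>i\<in>UNIV. cnj (x$i) * y$i)"

definition diagm :: "('n::finite \<Rightarrow> complex) \<Rightarrow> complex^'n^'n" where
  "diagm f = (\<chi> i j. if i = j then f i else 0)"

lemma cadj_cadj[simp]: "cadj (cadj M) = M"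
  by (simp add: cadj_def vec_eq_iff)

lemma cadj_mult: "cadj ((A::complex^'n^'m) ** (B::complex^'k^'n)) = cadj B ** cadj A"
  by (simp add: cadj_def vec_eq_iff matrix_matrix_mult_def mult.commute)

lemma cadj_add: "cadj (A + B) = cadj A + cadj B"
  by (simp add: cadj_def vec_eq_iff)

lemma cadj_diff: "cadj (A - B) = cadj A - cadj B"
  by (simp add: cadj_def vec_eq_iff)

lemma cadj_sum: "finite S \<Longrightarrow> cadj (\<Sum>k\<in>S. f k) = (\<Sum>k\<in>S. cadj (f k))"
  by (induction S rule: finite_induct) (auto simp: cadj_add cadj_def vec_eq_iff)

lemma cadj_mat[simp]: "cadj (mat c :: complex^'n^'n) = mat (cnj c)"
  by (auto simp: cadj_def vec_eq_iff mat_def)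

lemma cadj_diagm: "cadj (diagm f) = diagm (\<lambda>i. cnj (f i))"
  by (auto simp: cadj_def vec_eq_iff diagm_def)

lemma cinner_mat: "cinner (A *v x) y = cinner x (cadj A *v y)"
proof -
  have "cinner (A *v x) y = (\<Sum>i\<in>UNIV. \<Sum>j\<in>UNIV. cnj (A$i$j) * cnj (x$j) * y$i)"
    by (simp add: cinner_def matrix_vector_mult_def sum_distrib_right)
  also have "\<dots> = (\<Sum>j\<in>UNIV. \<Sum>i\<in>UNIV. cnj (A$i$j) * cnj (x$j) * y$i)"
    by (rule sum.swap)
  also have "\<dots> = cinner x (cadj A *v y)"
    by (simp add: cinner_def matrix_vector_mult_def cadj_def sum_distrib_left mult_ac)
  finally show ?thesis .
qed

lemma cinner_cnj: "cinner y x = cnj (cinner x y)"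
  by (simp add: cinner_def mult.commute)

lemma cinner_self: "cinner x x = of_real ((norm x)^2)"
proof -
  have "(norm x)^2 = (\<Sum>i\<in>UNIV. (cmod (x$i))^2)"
    by (simp add: norm_vec_def L2_set_def sum_nonneg)
  moreover have "cnj (x$i) * x$i = of_real ((cmod (x$i))^2)" for i
    by (metis complex_norm_square mult.commute)
  ultimately show ?thesis by (simp add: cinner_def sum_nonneg)
qed

lemma outer_hermitian[simp]: "cadj (outer x) = outer x"
  by (simp add: cadj_def outer_def vec_eq_iff mult.commute)

lemma outer_mult: "outer (B *v x) = B ** outer x ** cadj B"
proof -
  have "(B ** outer x ** cadj B)$i$j = (B *v x)$i * cnj ((B *v x)$j)" for i j
  proof -
    have "(B ** outer x ** cadj B)$i$j = (\<Sum>l\<in>UNIV. (\<Sum>k\<in>UNIV. B$i$k * (x$k * cnj (x$l))) * cnj (B$j$l))"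
      by (simp add: matrix_matrix_mult_def outer_def cadj_def)
    also have "\<dots> = (\<Sum>k\<in>UNIV. B$i$k * x$k) * (\<Sum>l\<in>UNIV. cnj (B$j$l) * cnj (x$l))"
      by (simp add: sum_distrib_right sum_distrib_left mult_ac)
    also have "\<dots> = (B *v x)$i * cnj ((B *v x)$j)"
      by (simp add: matrix_vector_mult_def)
    finally show ?thesis .
  qed
  then show ?thesis by (simp add: vec_eq_iff outer_def)
qed

lemma outer_apply: "outer v *v z = cinner v z *s v"
  unfolding outer_def cinner_def matrix_vector_mult_def
  by (simp add: vec_eq_iff sum_distrib_left mult_ac)

lemma cinner_smult: "cinner z (c *s v) = c * cinner z v"
  by (simp add: cinner_def sum_distrib_left mult_ac)

lemma cinner_outer: "cinner z (outer v *v z) = of_real ((cmod (cinner v z))^2)"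
proof -
  have "cinner z (outer v *v z) = cinner v z * cinner z v"
    by (simp add: outer_apply cinner_smult)
  also have "\<dots> = cinner v z * cnj (cinner v z)" by (simp add: cinner_cnj[of z v])
  also have "\<dots> = of_real ((cmod (cinner v z))^2)" by (metis complex_norm_square)
  finally show ?thesis .
qed

lemma cinner_add_right: "cinner z (a + b) = cinner z a + cinner z b"
  by (simp add: cinner_def distrib_left sum.distrib)
lemma cinner_add_left: "cinner (a + b) z = cinner a z + cinner b z"
  by (simp add: cinner_def distrib_right sum.distrib)
lemma cinner_diff_right: "cinner z (a - b) = cinner z a - cinner z b"
  by (simp add: cinner_def right_diff_distrib sum_subtractf)
lemma cinner_diff_left: "cinner (a - b) z = cinner a z - cinner b z"
  by (simp add: cinner_def left_diff_distrib sum_subtractf)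
lemma cinner_smult_left: "cinner (c *s v) z = cnj c * cinner v z"
  by (simp add: cinner_def sum_distrib_left mult_ac)
lemma scaleR_comp: "(r *\<^sub>R v)$i = complex_of_real r * v$i"
  by (metis vector_scaleR_component scaleR_conv_of_real)
lemma cinner_scaleR_right: "cinner z (r *\<^sub>R v) = r *\<^sub>R cinner z v"
  by (simp add: cinner_def scaleR_sum_right)
lemma cinner_scaleR_left: "cinner (r *\<^sub>R v) z = r *\<^sub>R cinner v z"
  by (simp add: cinner_def scaleR_sum_right)
lemma cinner_sum_right: "finite S \<Longrightarrow> cinner z (\<Sum>k\<in>S. f k) = (\<Sum>k\<in>S. cinner z (f k))"
  by (induction S rule: finite_induct) (auto simp: cinner_def distrib_left sum.distrib)
lemma cinner_zero_right[simp]: "cinner z 0 = 0" by (simp add: cinner_def)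
lemma cinner_zero_left[simp]: "cinner 0 z = 0" by (simp add: cinner_def)
lemma mv_scaleR: "(M::complex^'n^'m) *v (r *\<^sub>R z) = r *\<^sub>R (M *v z)"
  by (simp add: matrix_vector_mult_def vec_eq_iff scaleR_sum_right)
lemma cinner_self_eq0: "cinner x x = 0 \<longleftrightarrow> x = 0"
  by (simp add: cinner_self)

lemma herm_quad_real:
  assumes "cadj M = M"
  shows "cinner z (M *v z) = of_real (Re (cinner z (M *v z)))"
proof -
  have "cinner z (M *v z) = cinner (M *v z) z"
    using cinner_mat[of M z z] assms by simp
  also have "\<dots> = cnj (cinner z (M *v z))" by (rule cinner_cnj)
  finally have "Im (cinner z (M *v z)) = 0"
    by (metis cnj.simps(2) neg_equal_zero)
  then show ?thesis by (simp add: complex_eq_iff)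
qed

lemma herm_cinner_swap:
  assumes "cadj M = M"
  shows "cinner (M *v x) y = cinner x (M *v y)"
  using cinner_mat[of M x y] assms by simp

lemma cont_nth: "continuous_on S (\<lambda>z::'a::real_normed_vector^'n. z $ i)"
  by (rule linear_continuous_on) (rule bounded_linear_vec_nth)

lemma cont_quad: "continuous_on S (\<lambda>z. Re (cinner z ((M::complex^'n^'n) *v z)))"
  unfolding cinner_def matrix_vector_mult_def
  by (intro continuous_intros cont_nth)

lemma cont_cinner: "continuous_on S (\<lambda>z. cinner e z)"
  unfolding cinner_def
  by (intro continuous_intros cont_nth)

lemma cinner_expand:
  "cinner (a + t *\<^sub>R b) (c + t *\<^sub>R d) =
     cinner a c + t *\<^sub>R cinner a d + t *\<^sub>R cinner b c + (t*t) *\<^sub>R cinner b d"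
  by (simp add: cinner_add_left cinner_add_right cinner_scaleR_left cinner_scaleR_right scaleR_add_right)

lemma eig_exists:
  fixes M :: "complex^'n^'n" and E :: "(complex^'n) set"
  assumes herm: "cadj M = M"
    and eig: "\<forall>e\<in>E. \<exists>\<mu>::real. M *v e = of_real \<mu> *s e"
    and nz: "z0 \<noteq> 0" "\<forall>e\<in>E. cinner e z0 = 0"
  shows "\<exists>z \<mu>. (\<forall>e\<in>E. cinner e z = 0) \<and> cinner z z = 1 \<and> M *v z = of_real \<mu> *s z"
proof -
  define W where "W = {z. \<forall>e\<in>E. cinner e z = 0}"
  define f where "f z = Re (cinner z (M *v z))" for z
  define K where "K = W \<inter> sphere 0 1"
  have "W = (\<Inter>e\<in>E. {z. cinner e z = 0})" by (auto simp: W_def)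
  moreover have "closed {z::complex^'n. cinner e z = 0}" for e
    by (rule closed_Collect_eq) (rule cont_cinner, rule continuous_on_const)
  ultimately have "closed W" by auto
  then have cK: "compact K" unfolding K_def by (simp add: closed_Int_compact)
  have "(1 / norm z0) *\<^sub>R z0 \<in> K"
    using nz by (auto simp: K_def W_def cinner_scaleR_right)
  then have neK: "K \<noteq> {}" by auto
  obtain z where zK: "z \<in> K" and zmax: "\<forall>y\<in>K. f y \<le> f z"
    using continuous_attains_sup[OF cK neK, of f] cont_quad unfolding f_def by blast
  have fscale: "f (r *\<^sub>R y) = r * r * f y" for r y
    by (simp add: f_def mv_scaleR cinner_scaleR_left cinner_scaleR_right)
  have fW: "f y \<le> f z * (norm y)^2" if "y \<in> W" for y
  proof (cases "y = 0")
    case True then show ?thesis by (simp add: f_def)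
  next
    case False
    let ?y = "(1 / norm y) *\<^sub>R y"
    have "?y \<in> K" using that False by (auto simp: K_def W_def cinner_scaleR_right)
    then have "f ?y \<le> f z" using zmax by blast
    then have "(1/norm y) * (1/norm y) * f y \<le> f z" by (simp add: fscale)
    moreover have "0 < norm y" using False by simp
    ultimately have "(norm y)^2 * ((1/norm y) * (1/norm y) * f y) \<le> (norm y)^2 * f z"
      by (intro mult_left_mono) auto
    moreover have "(norm y)^2 * ((1/norm y) * (1/norm y) * f y) = f y"
      using \<open>0 < norm y\<close> by (simp add: power2_eq_square)
    ultimately show ?thesis by (simp add: mult.commute)
  qed
  define \<mu> where "\<mu> = f z"
  have zW: "z \<in> W" and zn: "norm z = 1" using zK by (auto simp: K_def)
  have zz: "cinner z z = 1" using zn by (simp add: cinner_self)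
  have zMz: "cinner z (M *v z) = of_real \<mu>"
    using herm_quad_real[OF herm, of z] by (simp add: \<mu>_def f_def)
  define r where "r = M *v z - of_real \<mu> *s z"
  have rW: "r \<in> W"
  proof -
    have "cinner e r = 0" if eE: "e \<in> E" for e
    proof -
      obtain \<nu> :: real where ev: "M *v e = of_real \<nu> *s e" using bspec[OF eig eE] by (elim exE)
      have ez: "cinner e z = 0" using zW eE by (auto simp: W_def)
      have "cinner e (M *v z) = cinner (M *v e) z" using herm_cinner_swap[OF herm, of e z] by simp
      also have "\<dots> = 0" using ez by (simp add: ev cinner_smult_left)
      finally show ?thesis using ez by (simp add: r_def cinner_diff_right cinner_smult)
    qed
    then show ?thesis by (simp add: W_def)
  qed
  have zr: "cinner z r = 0" by (simp add: r_def cinner_diff_right cinner_smult zz zMz)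
  have rz: "cinner r z = 0" using zr cinner_cnj[of r z] by simp
  have Mr1: "cinner z (M *v r) = cinner r r"
  proof -
    have "cinner z (M *v r) = cinner (M *v z) r" using herm_cinner_swap[OF herm, of z r] by simp
    also have "M *v z = r + of_real \<mu> *s z" by (simp add: r_def)
    finally show ?thesis by (simp add: cinner_add_left cinner_smult_left zr)
  qed
  have Mr2: "cinner r (M *v z) = cinner r r"
  proof -
    have "M *v z = r + of_real \<mu> *s z" by (simp add: r_def)
    then show ?thesis by (simp add: cinner_add_right cinner_smult rz)
  qed
  define R where "R = Re (cinner r r)"
  have Rn: "R = (norm r)^2" by (simp add: R_def cinner_self)
  have key: "\<mu> + 2 * t * R + t * t * f r \<le> \<mu> * (1 + t * t * R)" for t
  proof -
    let ?y = "z + t *\<^sub>R r"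
    have yW: "?y \<in> W" using zW rW by (auto simp: W_def cinner_add_right cinner_scaleR_right)
    have "f ?y = \<mu> + 2 * t * R + t * t * f r"
      using zMz Mr1 Mr2
      by (simp add: f_def matrix_vector_right_distrib mv_scaleR cinner_expand R_def)
    moreover have "(norm ?y)^2 = 1 + t * t * R"
    proof -
      have "of_real ((norm ?y)^2) = cinner ?y ?y" by (simp add: cinner_self)
      also have "\<dots> = 1 + (t*t) *\<^sub>R cinner r r"
        using cinner_expand[of z t r z r] zz zr rz by simp
      finally have "(norm ?y)^2 = Re (1 + (t*t) *\<^sub>R cinner r r)"
        by (metis Re_complex_of_real)
      then show ?thesis by (simp add: R_def)
    qed
    ultimately show ?thesis using fW[OF yW] by (simp add: \<mu>_def)
  qed
  have "R = 0"
  proof (rule ccontr)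
    assume "R \<noteq> 0"
    then have Rp: "R > 0" using Rn by simp
    define C where "C = \<mu> * R - f r"
    have key2: "2 * t * R \<le> t * t * C" for t
    proof -
      have "\<mu> + 2 * t * R + t * t * f r \<le> \<mu> * (1 + t * t * R)" by (rule key)
      then show ?thesis by (simp add: C_def algebra_simps)
    qed
    show False
    proof (cases "C \<le> 0")
      case True
      have "\<mu> + 2 * 1 * R + 1 * 1 * f r \<le> \<mu> * (1 + 1 * 1 * R)" by (rule key)
      then show False using True Rp by (simp add: C_def algebra_simps)
    next
      case False
      let ?t = "R / C"
      have tp: "?t > 0" using Rp False by simp
      have tC: "?t * C = R" using False by simp
      have "?t * ?t * C = ?t * R" by (metis mult.assoc tC)
      then have "2 * ?t * R \<le> ?t * R" using key2[of ?t] by linarith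
      moreover have "?t * R > 0" using tp Rp by (rule mult_pos_pos)
      ultimately show False by linarith
    qed
  qed
  then have "r = 0" using Rn by simp
  then have "M *v z = of_real \<mu> *s z" by (simp add: r_def)
  then show ?thesis using zW zz by (auto simp: W_def)
qed

definition orthonormal :: "(complex^'n) set \<Rightarrow> bool" where
  "orthonormal E \<longleftrightarrow> (\<forall>e\<in>E. cinner e e = 1) \<and> (\<forall>e\<in>E. \<forall>e'\<in>E. e \<noteq> e' \<longrightarrow> cinner e e' = 0)"

lemma cinner_axis: "cinner e (axis i 1) = cnj (e$i)"
  by (simp add: cinner_def axis_def if_distrib[of "\<lambda>x. cnj _ * x"] cong: if_cong)

lemma cinner_axis_axis: "cinner (axis i 1) (axis i 1 :: complex^'n) = 1"
  using cinner_axis[of "axis i 1" i] by (simp add: axis_def)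

lemma ortho_sum:
  assumes "finite E" "orthonormal E" "e' \<in> E"
  shows "cinner e' (\<Sum>e\<in>E. c e *s e) = c e'"
proof -
  have "cinner e' (\<Sum>e\<in>E. c e *s e) = (\<Sum>e\<in>E. c e * cinner e' e)"
    using assms(1) by (simp add: cinner_sum_right cinner_smult)
  also have "\<dots> = (\<Sum>e\<in>E. if e = e' then c e' else 0)"
    using assms(2,3) unfolding orthonormal_def
    by (intro sum.cong) (auto simp: cinner_smult)
  also have "\<dots> = c e'" using assms(1,3) by simp
  finally show ?thesis .
qed

lemma parseval_card:
  fixes E :: "(complex^'n) set"
  assumes fin: "finite E" and on: "orthonormal E"
    and full: "\<forall>z. (\<forall>e\<in>E. cinner e z = 0) \<longrightarrow> z = 0"
  shows "card E = CARD('n)"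
proof -
  have expand: "y = (\<Sum>e\<in>E. cinner e y *s e)" for y
  proof -
    let ?d = "y - (\<Sum>e\<in>E. cinner e y *s e)"
    have "\<forall>e\<in>E. cinner e ?d = 0"
      using ortho_sum[OF fin on] by (simp add: cinner_diff_right)
    then have "?d = 0" using full by blast
    then show ?thesis by simp
  qed
  have one: "(\<Sum>e\<in>E. cnj (e$i) * e$i) = 1" for i
  proof -
    let ?y = "axis i 1 :: complex^'n"
    have "cinner ?y ?y = cinner ?y (\<Sum>e\<in>E. cinner e ?y *s e)"
      using expand[of ?y] by simp
    also have "\<dots> = (\<Sum>e\<in>E. cinner e ?y * cinner ?y e)"
      using fin by (simp add: cinner_sum_right cinner_smult)
    also have "\<dots> = (\<Sum>e\<in>E. cnj (e$i) * e$i)"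
      by (intro sum.cong refl) (simp add: cinner_axis cinner_cnj[of ?y])
    finally show ?thesis using cinner_axis_axis[of i] by simp
  qed
  have "of_nat CARD('n) = (\<Sum>i\<in>(UNIV::'n set). (\<Sum>e\<in>E. cnj (e$i) * e$i))"
    using one by simp
  also have "\<dots> = (\<Sum>e\<in>E. \<Sum>i\<in>UNIV. cnj (e$i) * e$i)" by (rule sum.swap)
  also have "\<dots> = (\<Sum>e\<in>E. cinner e e)" by (simp add: cinner_def)
  also have "\<dots> = of_nat (card E)" using on by (simp add: orthonormal_def)
  finally have "(of_nat CARD('n) :: complex) = of_nat (card E)" .
  then show ?thesis by (simp only: of_nat_eq_iff)
qed

lemma basis_exists:
  fixes M :: "complex^'n^'n"
  assumes herm: "cadj M = M"
  shows "k \<le> CARD('n) \<Longrightarrow> \<exists>E. finite E \<and> card E = k \<and> orthonormal E \<and>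
            (\<forall>e\<in>E. \<exists>\<mu>::real. M *v e = of_real \<mu> *s e)"
proof (induction k)
  case 0
  show ?case by (intro exI[of _ "{}"]) (simp add: orthonormal_def)
next
  case (Suc k)
  then obtain E where E: "finite E" "card E = k" "orthonormal E"
      "\<forall>e\<in>E. \<exists>\<mu>::real. M *v e = of_real \<mu> *s e" by auto
  have "\<not> (\<forall>z. (\<forall>e\<in>E. cinner e z = 0) \<longrightarrow> z = 0)"
    using parseval_card[OF E(1) E(3)] E(2) Suc.prems by auto
  then obtain z0 where z0: "z0 \<noteq> 0" "\<forall>e\<in>E. cinner e z0 = 0" by auto
  obtain z \<mu> where z: "\<forall>e\<in>E. cinner e z = 0" "cinner z z = 1" "M *v z = of_real \<mu> *s z"
    using eig_exists[OF herm E(4) z0] by blast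
  have znE: "z \<notin> E" using z by auto
  have ze: "\<forall>e\<in>E. cinner z e = 0"
    using z(1) by (metis cinner_cnj complex_cnj_zero)
  have "orthonormal (insert z E)"
    using E(3) z(1,2) ze unfolding orthonormal_def by blast
  then show ?case using E z znE
    by (intro exI[of _ "insert z E"]) auto
qed

theorem spectral:
  fixes M :: "complex^'n^'n"
  assumes herm: "cadj M = M"
  shows "\<exists>U (\<mu>::'n \<Rightarrow> real). cadj U ** U = mat 1 \<and> U ** cadj U = mat 1 \<and>
           M = U ** diagm (\<lambda>i. of_real (\<mu> i)) ** cadj U"
proof -
  obtain E where E: "finite E" "card E = CARD('n)" "orthonormal E"
      "\<forall>e\<in>E. \<exists>\<mu>::real. M *v e = of_real \<mu> *s e"
    using basis_exists[OF herm, of "CARD('n)"] by auto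
  obtain g where g: "\<forall>e\<in>E. M *v e = of_real (g e) *s e" using E(4) by metis
  obtain h where h: "bij_betw h (UNIV::'n set) E"
    using finite_same_card_bij[of "UNIV::'n set" E] E by auto
  have hE: "h i \<in> E" for i using h by (auto simp: bij_betw_def)
  have hinj: "h i = h j \<Longrightarrow> i = j" for i j using h by (auto simp: bij_betw_def inj_on_def)
  define U where "U = (\<chi> i j. (h j)$i :: complex^'n^'n)"
  define \<mu> where "\<mu> i = g (h i)" for i
  have U1: "cadj U ** U = mat 1"
  proof -
    have "(cadj U ** U)$i$j = cinner (h i) (h j)" for i j
      by (simp add: matrix_matrix_mult_def cadj_def U_def cinner_def)
    moreover have "cinner (h i) (h j) = (if i = j then 1 else 0)" for i j
      using E(3) hE hinj unfolding orthonormal_def by metis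
    ultimately show ?thesis by (simp add: vec_eq_iff mat_def)
  qed
  then have U2: "U ** cadj U = mat 1" by (simp add: matrix_left_right_inverse)
  have MU: "M ** U = U ** diagm (\<lambda>i. of_real (\<mu> i))"
  proof -
    have "(M ** U)$i$j = (M *v h j)$i" for i j
      by (simp add: matrix_matrix_mult_def matrix_vector_mult_def U_def)
    moreover have "(M *v h j)$i = of_real (\<mu> j) * (h j)$i" for i j
      using g hE by (simp add: \<mu>_def)
    moreover have "(U ** diagm (\<lambda>i. of_real (\<mu> i)))$i$j = (h j)$i * of_real (\<mu> j)" for i j
      by (simp add: matrix_matrix_mult_def diagm_def U_def if_distrib cong: if_cong)
    ultimately show ?thesis by (simp add: vec_eq_iff mult.commute)
  qed
  have "M = M ** (U ** cadj U)" by (simp add: U2)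
  also have "\<dots> = U ** diagm (\<lambda>i. of_real (\<mu> i)) ** cadj U"
    by (metis MU matrix_mul_assoc)
  finally show ?thesis using U1 U2 by blast
qed

lemma row_eq: "row i A = A $ i"
  by (simp add: row_def vec_eq_iff)

lemma det_onerow:
  fixes a :: "'n::finite \<Rightarrow> complex" and z :: "complex^'n"
  shows "det (\<chi> i j. if i = k then z$j else if i = j then a i else 0) = z$k * (\<Prod>l\<in>UNIV-{k}. a l)"
proof -
  define A where "A = (\<chi> i j. if i = k then z$j else if i = j then a i else 0 :: complex^'n^'n)"
  define P where "P = {p. p permutes (UNIV::'n set)}"
  have zero: "(\<Prod>i\<in>UNIV. A$i$p i) = 0" if p: "p \<in> P" "p \<noteq> id" for p
  proof -
    have "\<exists>i. i \<noteq> k \<and> p i \<noteq> i"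
    proof (rule ccontr)
      assume "\<not> (\<exists>i. i \<noteq> k \<and> p i \<noteq> i)"
      then have fx: "\<And>i. i \<noteq> k \<Longrightarrow> p i = i" by blast
      have "p k = k"
      proof (rule ccontr)
        assume "p k \<noteq> k"
        then have "p (p k) = p k" using fx by blast
        moreover have "inj p" using p(1) by (simp add: P_def permutes_inj)
        ultimately have "p k = k" by (simp add: inj_eq)
        then show False using \<open>p k \<noteq> k\<close> by simp
      qed
      then have "p = id" using fx by (metis eq_id_iff)
      then show False using p(2) by simp
    qed
    then obtain i where "i \<noteq> k" "p i \<noteq> i" by blast
    then have "A$i$p i = 0" by (simp add: A_def)
    then show ?thesis by (intro prod_zero) auto
  qed
  have idP: "id \<in> P" by (simp add: P_def)
  have "det A = (\<Sum>p\<in>P. of_int (sign p) * (\<Prod>i\<in>UNIV. A$i$p i))"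
    by (simp add: det_def P_def)
  also have "\<dots> = of_int (sign (id::'n\<Rightarrow>'n)) * (\<Prod>i\<in>UNIV. A$i$id i) +
      (\<Sum>p\<in>P - {id}. of_int (sign p) * (\<Prod>i\<in>UNIV. A$i$p i))"
  proof -
    have fin: "finite P" by (simp add: P_def finite_permutations)
    show ?thesis using sum.remove[OF fin idP, of "\<lambda>p. of_int (sign p) * (\<Prod>i\<in>UNIV. A$i$p i)"]
      by simp
  qed
  also have "(\<Sum>p\<in>P - {id}. of_int (sign p) * (\<Prod>i\<in>UNIV. A$i$p i)) = 0"
    using zero by (intro sum.neutral) auto
  also have "(\<Prod>i\<in>UNIV. A$i$id i) = (\<Prod>i\<in>UNIV. if i = k then z$k else a i)"
    by (intro prod.cong) (auto simp: A_def)
  also have "\<dots> = z$k * (\<Prod>l\<in>UNIV-{k}. a l)"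
  proof -
    have "(\<Prod>i\<in>UNIV - {k}. if i = k then z$k else a i) = (\<Prod>i\<in>UNIV - {k}. a i)"
      by (intro prod.cong) auto
    then show ?thesis by (simp add: prod.remove[of UNIV k])
  qed
  finally show ?thesis by (simp add: A_def)
qed

lemma det_rowops:
  fixes r :: "'n::finite \<Rightarrow> complex^'n" and c :: "complex^'n" and f :: "'n \<Rightarrow> complex"
  shows "k \<notin> T \<Longrightarrow> det (\<chi> i. if i = k then c else if i \<in> T then r i - f i *s c else r i)
           = det (\<chi> i. if i = k then c else r i)"
proof -
  have "finite T" by simp
  then show "k \<notin> T \<Longrightarrow> ?thesis"
  proof (induction T rule: finite_induct)
    case empty
    have "(\<chi> i. if i = k then c else if i \<in> {} then r i - f i *s c else r i) = (\<chi> i. if i = k then c else r i)"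
      by (simp add: vec_eq_iff)
    then show ?case by simp
  next
    case (insert t T)
    define A where "A = (\<chi> i. if i = k then c else if i \<in> insert t T then r i - f i *s c else r i)"
    have tk: "t \<noteq> k" using insert.prems by auto
    have "det (\<chi> k'. if k' = t then row t A + f t *s row k A else row k' A) = det A"
      by (rule det_row_operation[OF tk])
    moreover have "(\<chi> k'. if k' = t then row t A + f t *s row k A else row k' A) =
        (\<chi> i. if i = k then c else if i \<in> T then r i - f i *s c else r i)"
      using tk insert.hyps(2) by (auto simp: vec_eq_iff row_eq A_def)
    ultimately have "det A = det (\<chi> i. if i = k then c else if i \<in> T then r i - f i *s c else r i)"
      by simp
    also have "\<dots> = det (\<chi> i. if i = k then c else r i)"
      using insert.IH insert.prems by auto
    finally show ?case by (simp add: A_def)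
  qed
qed

lemma det_diag_rank1:
  fixes a b :: "'n::finite \<Rightarrow> complex" and c :: "complex^'n"
  shows "det (\<chi> i j. (if i = j then a i else 0) - (if i \<in> S then b i * c$j else 0)) =
    (\<Prod>l\<in>UNIV. a l) - (\<Sum>i\<in>S. b i * c$i * (\<Prod>l\<in>UNIV-{i}. a l))"
proof -
  have "finite S" by simp
  then show ?thesis
  proof (induction S rule: finite_induct)
    case empty
    show ?case by (subst det_diagonal) auto
  next
    case (insert k S)
    define D where "D = (\<lambda>i. (\<chi> j. if i = j then a i else 0) :: complex^'n)"
    define N0 where "N0 = ((\<chi> i j. (if i = j then a i else 0) - (if i \<in> S then b i * c$j else 0)) :: complex^'n^'n)"
    define N where "N = ((\<chi> i j. (if i = j then a i else 0) - (if i \<in> insert k S then b i * c$j else 0)) :: complex^'n^'n)"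
    have N0row: "N0$i = (if i \<in> S then D i - b i *s c else D i)" for i
      by (auto simp: N0_def D_def vec_eq_iff)
    have "N = (\<chi> i. if i = k then N0$i + (- b k) *s c else N0$i)"
      using insert.hyps(2) by (auto simp: vec_eq_iff N_def N0_def)
    then have "det N = det (\<chi> i. if i = k then N0$i else N0$i) + det (\<chi> i. if i = k then (- b k) *s c else N0$i)"
      by (simp add: det_row_add)
    also have "(\<chi> i. if i = k then N0$i else N0$i) = N0" by (simp add: vec_eq_iff)
    also have "det (\<chi> i. if i = k then (- b k) *s c else N0$i) = (- b k) * det (\<chi> i. if i = k then c else N0$i)"
      by (rule det_row_mul)
    also have "(\<chi> i. if i = k then c else N0$i) = (\<chi> i. if i = k then c else if i \<in> S then D i - b i *s c else D i)"
      by (intro arg_cong[where f = vec_lambda] ext) (simp only: N0row)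
    also have "det \<dots> = det (\<chi> i. if i = k then c else D i)"
      by (rule det_rowops[OF insert.hyps(2)])
    also have "(\<chi> i. if i = k then c else D i) = (\<chi> i j. if i = k then c$j else if i = j then a i else 0)"
      by (simp add: vec_eq_iff D_def)
    also have "det \<dots> = c$k * (\<Prod>l\<in>UNIV-{k}. a l)" by (rule det_onerow)
    finally have "det N = det N0 - b k * c$k * (\<Prod>l\<in>UNIV-{k}. a l)" by simp
    then show ?case using insert.IH insert.hyps by (simp add: N_def N0_def algebra_simps)
  qed
qed

lemma exp_02_upper: "exp (0.2::real) \<le> 1.2278"
proof -
  have e: "exp (0.05::real) \<le> 20/19"
  proof -
    have "1 + (-0.05::real) \<le> exp (-0.05)" by (rule exp_ge_add_one_self)
    then have "exp (0.05::real) * (19/20) \<le> exp (0.05) * exp (-0.05)" by simp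
    also have "\<dots> = 1" by (simp add: exp_minus_inverse)
    finally show ?thesis by simp
  qed
  have "exp (0.2::real) = exp (0.05) ^ 4"
    using exp_of_nat_mult[of 4 "0.05::real"] by simp
  also have "\<dots> \<le> (20/19)^4" by (rule power_mono[OF e]) simp
  also have "\<dots> = 160000/130321" by (simp add: power_divide)
  also have "\<dots> \<le> 1.2278" by simp
  finally show ?thesis .
qed

lemma exp_02_lower: "exp (0.2::real) \<ge> 1.2189"
proof -
  have e: "1.02 \<le> exp (0.02::real)"
    using exp_ge_add_one_self[of "0.02::real"] by simp
  have "(1.2189::real) \<le> (1.02::real)^10" by (simp add: power_divide)
  also have "(1.02::real)^10 \<le> exp (0.02) ^ 10" by (rule power_mono[OF e]) simp
  also have "\<dots> = exp (0.2)"
    using exp_of_nat_mult[of 10 "0.02::real"] by simp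
  finally show ?thesis .
qed

lemma exp_le_inv: "s < 1 \<Longrightarrow> exp (s::real) \<le> 1 / (1 - s)"
proof -
  assume s: "s < 1"
  have "1 + (-s) \<le> exp (-s)" by (rule exp_ge_add_one_self)
  then have "exp s * (1 - s) \<le> exp s * exp (-s)" by (intro mult_left_mono) auto
  also have "\<dots> = 1" by (simp add: exp_minus_inverse)
  finally show ?thesis using s by (simp add: field_simps)
qed

lemma texp_bound:
  fixes t :: real
  assumes "t > 0" and "t * exp (1 - t) \<ge> 0.9872"
  shows "0.8 \<le> t \<and> t \<le> 1.2"
proof (rule ccontr)
  assume "\<not> (0.8 \<le> t \<and> t \<le> 1.2)"
  then consider "t < 0.8" | "t > 1.2" by linarith
  then show False
  proof cases
    case 1
    have "exp (1 - t) = exp 0.2 * exp (0.8 - t)" by (simp flip: exp_add)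
    moreover have "exp (0.8 - t) \<le> 1 / (0.2 + t)"
      using exp_le_inv[of "0.8 - t"] assms(1) by simp
    then have "t * exp (0.8 - t) \<le> t * (1 / (0.2 + t))"
      using assms(1) by (intro mult_left_mono) auto
    then have "exp 0.2 * (t * exp (0.8 - t)) \<le> exp 0.2 * (t / (0.2 + t))"
      by (intro mult_left_mono) auto
    ultimately have "t * exp (1 - t) \<le> exp 0.2 * (t / (0.2 + t))"
      by (simp add: mult_ac)
    also have "t / (0.2 + t) \<le> 0.8" using 1 assms(1) by (simp add: field_simps)
    then have "exp 0.2 * (t / (0.2 + t)) \<le> exp 0.2 * 0.8" by (intro mult_left_mono) auto
    also have "\<dots> \<le> 1.2278 * 0.8" using exp_02_upper by simp
    finally show False using assms(2) by simp
  next
    case 2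
    have "exp (1 - t) = exp (1.2 - t) / exp 0.2" by (simp flip: exp_diff)
    moreover have "exp (1.2 - t) \<le> 1 / (t - 0.2)"
    proof -
      have "1 + (t - 1.2) \<le> exp (t - 1.2)" by (rule exp_ge_add_one_self)
      then have "(t - 0.2) * exp (1.2 - t) \<le> exp (t - 1.2) * exp (1.2 - t)"
        by (intro mult_right_mono) auto
      also have "\<dots> = 1" by (simp flip: exp_add)
      finally show ?thesis using 2 by (simp add: field_simps)
    qed
    then have "t * exp (1.2 - t) \<le> t * (1 / (t - 0.2))"
      using assms(1) by (intro mult_left_mono) auto
    then have "(t * exp (1.2 - t)) / exp 0.2 \<le> (t * (1 / (t - 0.2))) / exp 0.2"
      by (intro divide_right_mono) auto
    ultimately have "t * exp (1 - t) \<le> (t / (t - 0.2)) / exp 0.2"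
      by simp
    also have "t / (t - 0.2) \<le> 1.2" using 2 by (simp add: field_simps)
    then have "(t / (t - 0.2)) / exp 0.2 \<le> 1.2 / exp 0.2" by (intro divide_right_mono) auto
    also have "\<dots> \<le> 1.2 / 1.2189" using exp_02_lower by (intro divide_left_mono) auto
    finally show False using assms(2) by simp
  qed
qed

lemma prod_le_texp:
  fixes y :: "'n::finite \<Rightarrow> real"
  assumes pos: "\<forall>i. y i > 0" and sum: "(\<Sum>i\<in>UNIV. y i) = real CARD('n)"
  shows "(\<Prod>i\<in>UNIV. y i) \<le> y k * exp (1 - y k)"
proof -
  have "(\<Prod>i\<in>UNIV. y i) = y k * (\<Prod>i\<in>UNIV - {k}. y i)"
    by (simp add: prod.remove)
  also have "(\<Prod>i\<in>UNIV - {k}. y i) \<le> (\<Prod>i\<in>UNIV - {k}. exp (y i - 1))"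
    using pos by (intro prod_mono) (auto simp: less_imp_le exp_ge_add_one_self[of "y _ - 1", simplified])
  also have "\<dots> = exp (\<Sum>i\<in>UNIV - {k}. (y i - 1))" by (simp add: exp_sum)
  also have "(\<Sum>i\<in>UNIV - {k}. (y i - 1)) = 1 - y k"
  proof -
    have "(\<Sum>i\<in>UNIV - {k}. (y i - 1)) = (\<Sum>i\<in>UNIV. (y i - 1)) - (y k - 1)"
      by (simp add: sum_diff1)
    also have "(\<Sum>i\<in>UNIV. (y i - 1)) = real CARD('n) - real CARD('n)"
      by (simp add: sum_subtractf sum)
    finally show ?thesis by simp
  qed
  finally show ?thesis using pos by (simp add: mult_left_mono less_imp_le)
qed

lemma bound_lemma:
  fixes y :: "'n::finite \<Rightarrow> real"
  assumes pos: "\<forall>i. y i > 0" and sum: "(\<Sum>i\<in>UNIV. y i) = real CARD('n)"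
    and prod: "(\<Prod>i\<in>UNIV. y i) \<ge> 0.9872"
  shows "0.8 \<le> y k \<and> y k \<le> 1.2"
proof -
  have "y k * exp (1 - y k) \<ge> 0.9872" using prod_le_texp[OF pos sum, of k] prod by linarith
  then show ?thesis using texp_bound[of "y k"] pos by blast
qed

lemma prod_one_plus_ge:
  fixes t :: "'a \<Rightarrow> real"
  assumes "finite A" "\<forall>i\<in>A. t i \<ge> 0"
  shows "(\<Prod>i\<in>A. 1 + t i) \<ge> 1 + (\<Sum>i\<in>A. t i)"
  using assms
proof (induction A rule: finite_induct)
  case empty then show ?case by simp
next
  case (insert a A)
  have ta: "t a \<ge> 0" and tA: "\<forall>i\<in>A. t i \<ge> 0" using insert.prems by auto
  have IH: "(\<Prod>i\<in>A. 1 + t i) \<ge> 1 + (\<Sum>i\<in>A. t i)" using insert.IH tA by blast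
  have sA: "(\<Sum>i\<in>A. t i) \<ge> 0" using tA by (simp add: sum_nonneg)
  have "(1 + t a) * (1 + (\<Sum>i\<in>A. t i)) \<le> (1 + t a) * (\<Prod>i\<in>A. 1 + t i)"
    using IH ta by (intro mult_left_mono) auto
  moreover have "1 + (t a + (\<Sum>i\<in>A. t i)) \<le> (1 + t a) * (1 + (\<Sum>i\<in>A. t i))"
    using ta sA by (simp add: algebra_simps)
  ultimately show ?case using insert.hyps by simp
qed

lemma step_real:
  fixes x :: "'n::finite \<Rightarrow> real" and W :: "nat \<Rightarrow> 'n \<Rightarrow> real" and R :: "nat set"
    and G :: "nat \<Rightarrow> real" and m j :: nat
  assumes mpos: "m > 0" and jm: "2 * j + 2 \<le> m"
    and dm: "real CARD('n) * real CARD('n) * 221 \<le> real m"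
    and xb: "\<forall>i. 0.4 \<le> x i \<and> x i \<le> 0.6"
    and xs: "(\<Sum>i\<in>UNIV. x i) = real CARD('n) / 2"
    and u: "u = 1/2 + real j / real m"
    and finR: "finite R" and cardR: "card R = m - j"
    and Wsum: "\<forall>i. (\<Sum>k\<in>R. W k i) = 1 - u + x i"
    and ks: "ks \<in> R"
    and greedy: "\<forall>k\<in>R. G k \<le> G ks"
    and Gdef: "\<forall>k. G k = (\<Prod>l\<in>UNIV. x l + 1 / real m) -
                 (\<Sum>i\<in>UNIV. W k i * (\<Prod>l\<in>UNIV-{i}. x l + 1 / real m))"
  shows "G ks \<ge> (\<Prod>l\<in>UNIV. x l) * (1 - 5.625 * real CARD('n) * real CARD('n) / (real m * real m))"
proof -
  define d where "d = real CARD('n)"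
  define M where "M = real m"
  define J where "J = real j"
  define \<delta> where "\<delta> = 1 / M"
  define y where "y l = x l + \<delta>" for l
  define P where "P = (\<Prod>l\<in>UNIV. y l)"
  have Mpos: "M > 0" using mpos by (simp add: M_def)
  have dpos: "d \<ge> 1" by (simp add: d_def)
  have JM: "2 * J + 2 \<le> M" using jm by (simp add: J_def M_def)
  have J0: "J \<ge> 0" by (simp add: J_def)
  have dpos0: "\<delta> > 0" using Mpos by (simp add: \<delta>_def)
  have xpos: "x i > 0" for i using xb[rule_format, of i] by linarith
  have ypos: "y i > 0" for i using xpos dpos0 by (simp add: y_def add_pos_pos)
  have Ppos: "P > 0" unfolding P_def using ypos by (simp add: prod_pos)
  have py: "(\<Prod>l\<in>UNIV-{i}. y l) = P / y i" for i
  proof -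
    have "P = y i * (\<Prod>l\<in>UNIV-{i}. y l)" unfolding P_def by (simp add: prod.remove)
    then show ?thesis using ypos[of i] by (simp add: field_simps)
  qed
  have Gk: "G k = P * (1 - (\<Sum>i\<in>UNIV. W k i / y i))" for k
  proof -
    have "G k = P - (\<Sum>i\<in>UNIV. W k i * (P / y i))"
      using Gdef py by (simp add: P_def y_def \<delta>_def M_def)
    also have "(\<Sum>i\<in>UNIV. W k i * (P / y i)) = P * (\<Sum>i\<in>UNIV. W k i / y i)"
      by (simp add: sum_distrib_left mult_ac)
    finally show ?thesis by (simp add: algebra_simps)
  qed
  define S where "S = (\<Sum>i\<in>UNIV. 1 / y i)"
  define S' where "S' = (\<Sum>i\<in>UNIV. 1 / x i)"
  define c where "c = 1 - u - \<delta>"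
  define T where "T = (\<Sum>i\<in>UNIV. (1 - u + x i) / y i)"
  have T_eq: "T = d + c * S"
  proof -
    have "(1 - u + x i) / y i = 1 + c * (1 / y i)" for i
      using ypos[of i] by (simp add: c_def y_def field_simps)
    then show ?thesis by (simp add: T_def sum.distrib sum_distrib_left d_def S_def)
  qed
  have sumG: "(\<Sum>k\<in>R. G k) = (M - J) * P - P * T"
  proof -
    have "(\<Sum>k\<in>R. G k) = (\<Sum>k\<in>R. P - P * (\<Sum>i\<in>UNIV. W k i / y i))"
      by (simp add: Gk algebra_simps)
    also have "\<dots> = real (card R) * P - P * (\<Sum>k\<in>R. \<Sum>i\<in>UNIV. W k i / y i)"
      by (simp add: sum_subtractf sum_distrib_left)
    also have "(\<Sum>k\<in>R. \<Sum>i\<in>UNIV. W k i / y i) = (\<Sum>i\<in>UNIV. \<Sum>k\<in>R. W k i / y i)"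
      by (rule sum.swap)
    also have "\<dots> = T"
      by (simp add: T_def sum_divide_distrib[symmetric] Wsum)
    also have "real (card R) = M - J" using cardR jm by (simp add: M_def J_def of_nat_diff)
    finally show ?thesis .
  qed
  have "(\<Sum>k\<in>R. G k) \<le> real (card R) * G ks"
    using sum_bounded_above[of R G "G ks"] greedy by simp
  then have avg: "(M - J) * P - P * T \<le> (M - J) * G ks"
    using sumG cardR jm by (simp add: M_def J_def of_nat_diff)
  define Q where "Q = T / (M - J)"
  have MJ: "M - J > 0" using JM Mpos J0 by linarith
  have G1: "G ks \<ge> P * (1 - Q)"
  proof -
    have "P * (1 - Q) * (M - J) = (M - J) * P - P * T"
      using MJ by (simp add: Q_def field_simps)
    then have "P * (1 - Q) * (M - J) \<le> G ks * (M - J)" using avg by (simp add: mult.commute)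
    then show ?thesis using MJ by simp
  qed
  have SS': "S \<le> S'" unfolding S_def S'_def
    using xpos ypos dpos0 by (intro sum_mono) (simp add: y_def frac_le)
  have S0: "S \<ge> 0" unfolding S_def using ypos by (simp add: sum_nonneg less_imp_le)
  have S'lo: "S' \<ge> 2 * d"
  proof -
    have "1 / x i \<ge> 4 - 4 * x i" for i
    proof -
      have "0 \<le> (2 * x i - 1)^2" by simp
      then have "4 * x i - 4 * x i * x i \<le> 1" by (simp add: power2_eq_square algebra_simps)
      then have "(4 - 4 * x i) * x i \<le> 1" by (simp add: algebra_simps)
      then show ?thesis using xpos[of i] by (simp add: field_simps)
    qed
    then have "(\<Sum>i\<in>UNIV. 4 - 4 * x i) \<le> S'" unfolding S'_def by (intro sum_mono) auto
    moreover have "(\<Sum>i\<in>UNIV. 4 - 4 * x i) = 4 * d - 4 * (d / 2)"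
      by (simp add: sum_subtractf sum_distrib_left[symmetric] xs d_def)
    ultimately show ?thesis by simp
  qed
  have S'hi: "S' \<le> 2.5 * d"
  proof -
    have "1 / x i \<le> 2.5" for i using xb[rule_format, of i] xpos[of i] by (simp add: field_simps)
    then have "S' \<le> (\<Sum>i\<in>(UNIV::'n set). 2.5)" unfolding S'_def by (intro sum_mono) auto
    then show ?thesis by (simp add: d_def)
  qed
  define c0 where "c0 = 1/2 - J / M"
  have c_nonneg: "c \<ge> 0"
  proof -
    have "(J + 1) / M \<le> 1/2" using JM Mpos by (simp add: field_simps)
    then show ?thesis by (simp add: c_def u \<delta>_def J_def M_def add_divide_distrib)
  qed
  have cc0: "c \<le> c0" using dpos0 by (simp add: c_def c0_def u J_def M_def)
  have cS: "c * S \<le> c0 * S'"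
    using c_nonneg cc0 SS' S0 by (meson mult_mono order_trans c_nonneg)
  have c0M: "c0 * M = M / 2 - J" using Mpos by (simp add: c0_def field_simps)
  have c0nn: "c0 \<ge> 0" using c_nonneg cc0 by linarith
  have Q1: "Q \<le> S' / M"
  proof -
    have "T * M \<le> (d + c0 * S') * M" using T_eq cS Mpos by (simp add: mult_right_mono)
    also have "\<dots> = d * M + (c0 * M) * S'" by (simp add: algebra_simps)
    also have "\<dots> = d * M + (M / 2 - J) * S'" by (simp only: c0M)
    also have "\<dots> \<le> (M - J) * S'"
    proof -
      have "(M / 2) * (2 * d) \<le> (M / 2) * S'" using S'lo Mpos by (intro mult_left_mono) auto
      then have "d * M \<le> (M / 2) * S'" by (simp add: mult_ac)
      then show ?thesis by (simp add: algebra_simps)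
    qed
    finally have "T * M \<le> (M - J) * S'" .
    then show ?thesis using MJ Mpos by (simp add: Q_def field_simps)
  qed
  have Q2: "Q \<le> 2.25 * d / M"
  proof -
    have "c0 * S' \<le> c0 * (2.5 * d)" using S'hi c0nn by (intro mult_left_mono) auto
    then have "T * M \<le> (d + c0 * (2.5 * d)) * M" using T_eq cS Mpos by (simp add: mult_right_mono)
    also have "\<dots> = d * M + (c0 * M) * (2.5 * d)" by (simp add: algebra_simps)
    also have "\<dots> = d * M + (M / 2 - J) * (2.5 * d)" by (simp only: c0M)
    also have "\<dots> \<le> 2.25 * d * (M - J)"
    proof -
      have e1: "d * M + (M / 2 - J) * (2.5 * d) = 2.25 * (d * M) - 2.5 * (J * d)" by (simp add: field_simps)
      have e2: "2.25 * d * (M - J) = 2.25 * (d * M) - 2.25 * (J * d)" by (simp add: field_simps)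
      have "J * d \<ge> 0" using J0 dpos by simp
      then show ?thesis unfolding e1 e2 by simp
    qed
    finally have "T * M \<le> 2.25 * d * (M - J)" .
    then show ?thesis using MJ Mpos by (simp add: Q_def field_simps)
  qed
  have Q0: "Q \<ge> 0"
  proof -
    have "T \<ge> 0" using T_eq c_nonneg S0 dpos by simp
    then show ?thesis using MJ by (simp add: Q_def)
  qed
  have Q1': "1 - Q \<ge> 0"
  proof -
    have "2.25 * d / M \<le> 1"
    proof -
      have "d \<le> d * d" using dpos by simp
      moreover have "d * d * 221 \<le> M" using dm by (simp add: d_def M_def)
      ultimately have "9/4 * d \<le> M" using dpos by linarith
      then have "2.25 * d \<le> M" by simp
      then show ?thesis using Mpos by simp
    qed
    then show ?thesis using Q2 by simp
  qed
  define X where "X = (\<Prod>l\<in>UNIV. x l)"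
  have Xpos: "X > 0" unfolding X_def using xpos by (simp add: prod_pos)
  have PX: "P \<ge> X * (1 + S' / M)"
  proof -
    have xl: "x l + \<delta> = x l * (1 + \<delta> / x l)" for l
      using xpos[of l] by (simp add: field_simps)
    have "P = (\<Prod>l\<in>UNIV. x l * (1 + \<delta> / x l))"
      unfolding P_def y_def by (simp only: xl)
    also have "\<dots> = X * (\<Prod>l\<in>UNIV. 1 + \<delta> / x l)" by (simp add: X_def prod.distrib)
    finally have PX1: "P = X * (\<Prod>l\<in>UNIV. 1 + \<delta> / x l)" .
    have "(\<Prod>l\<in>UNIV. 1 + \<delta> / x l) \<ge> 1 + (\<Sum>l\<in>UNIV. \<delta> / x l)"
      using xpos dpos0 by (intro prod_one_plus_ge) (auto intro: less_imp_le)
    moreover have "(\<Sum>l\<in>UNIV. \<delta> / x l) = S' / M"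
      by (simp add: S'_def \<delta>_def sum_divide_distrib mult.commute)
    ultimately show ?thesis using PX1 Xpos by (simp add: mult_left_mono)
  qed
  have "P * (1 - Q) \<ge> X * (1 + S' / M) * (1 - Q)"
    using PX Q1' by (rule mult_right_mono)
  then have G2: "G ks \<ge> X * ((1 + S' / M) * (1 - Q))"
    using G1 by (simp add: mult.assoc)
  have A1: "(1 + S' / M) * (1 - Q) \<ge> 1 - (S' / M) * Q"
  proof -
    have "\<And>a::real. (1 + a) * (1 - Q) = 1 - a * Q + (a - Q)" by (simp add: algebra_simps)
    then have "(1 + S' / M) * (1 - Q) = 1 - (S' / M) * Q + (S' / M - Q)" by blast
    then show ?thesis using Q1 by linarith
  qed
  have A2: "(S' / M) * Q \<le> (2.5 * d / M) * (2.25 * d / M)"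
  proof (rule mult_mono)
    show "S' / M \<le> 2.5 * d / M" using S'hi Mpos by (intro divide_right_mono) auto
    show "Q \<le> 2.25 * d / M" by (rule Q2)
    show "0 \<le> 2.5 * d / M" using dpos Mpos by simp
    show "0 \<le> Q" by (rule Q0)
  qed
  have A3: "(2.5 * d / M) * (2.25 * d / M) = 5.625 * d * d / (M * M)" by simp
  have "(1 + S' / M) * (1 - Q) \<ge> 1 - 5.625 * d * d / (M * M)" using A1 A2 A3 by linarith
  then have "X * ((1 + S' / M) * (1 - Q)) \<ge> X * (1 - 5.625 * d * d / (M * M))"
    using Xpos by (intro mult_left_mono) auto
  then have "G ks \<ge> X * (1 - 5.625 * d * d / (M * M))" using G2 by linarith
  then show ?thesis by (simp add: X_def d_def M_def)
qed

definition unitary :: "complex^'n^'n \<Rightarrow> bool" where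
  "unitary U \<longleftrightarrow> cadj U ** U = mat 1 \<and> U ** cadj U = mat 1"

lemma mv_smult: "(A::complex^'n^'m) *v (c *s x) = c *s (A *v x)"
  by (simp add: matrix_vector_mult_def vec_eq_iff sum_distrib_left mult_ac)

lemma matrix_diff_ldistrib: "(A::complex^'n^'m) ** (X - Y) = A ** X - A ** Y"
  by (simp add: matrix_matrix_mult_def vec_eq_iff sum_subtractf algebra_simps)

lemma matrix_diff_rdistrib: "((X::complex^'n^'m) - Y) ** B = X ** B - Y ** B"
  by (simp add: matrix_matrix_mult_def vec_eq_iff sum_subtractf algebra_simps)

lemma matrix_add_rdistrib': "((X::complex^'n^'m) + Y) ** B = X ** B + Y ** B"
  by (simp add: matrix_matrix_mult_def vec_eq_iff sum.distrib algebra_simps)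

lemma det_conj:
  fixes U X :: "complex^'n^'n"
  assumes "U ** cadj U = mat 1"
  shows "det (U ** X ** cadj U) = det X"
proof -
  have "det (U ** X ** cadj U) = det U * det X * det (cadj U)" by (simp add: det_mul)
  also have "\<dots> = det X * det (U ** cadj U)" by (simp add: det_mul)
  finally show ?thesis using assms by simp
qed

lemma conj_diagm_mv:
  assumes "unitary U"
  shows "cadj U *v ((U ** D ** cadj U) *v x) = D *v (cadj U *v x)"
proof -
  have "cadj U ** (U ** D ** cadj U) = D ** cadj U"
    using assms by (simp add: unitary_def matrix_mul_assoc)
  then show ?thesis by (metis matrix_vector_mul_assoc)
qed

lemma diagm_mv: "(diagm \<mu> *v y)$i = \<mu> i * y$i"
  by (simp add: diagm_def matrix_vector_mult_def if_distrib if_distribR cong: if_cong)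

lemma eigs_conj:
  assumes U: "unitary U"
  shows "eigs (U ** diagm \<mu> ** cadj U) = range \<mu>"
proof
  show "eigs (U ** diagm \<mu> ** cadj U) \<subseteq> range \<mu>"
  proof
    fix c assume "c \<in> eigs (U ** diagm \<mu> ** cadj U)"
    then obtain x where x: "x \<noteq> 0" "(U ** diagm \<mu> ** cadj U) *v x = c *s x"
      by (auto simp: eigs_def)
    define y where "y = cadj U *v x"
    have "U *v y = x" using U by (simp add: y_def unitary_def matrix_vector_mul_assoc)
    then have "y \<noteq> 0" using x(1) by auto
    then obtain i where yi: "y$i \<noteq> 0" by (auto simp: vec_eq_iff)
    have "diagm \<mu> *v y = c *s y"
      using conj_diagm_mv[OF U, of "diagm \<mu>" x] x(2) by (simp add: y_def mv_smult)
    then have "\<mu> i * y$i = c * y$i" by (metis diagm_mv vector_smult_component)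
    then have "c = \<mu> i" using yi by simp
    then show "c \<in> range \<mu>" by simp
  qed
next
  show "range \<mu> \<subseteq> eigs (U ** diagm \<mu> ** cadj U)"
  proof
    fix c assume "c \<in> range \<mu>"
    then obtain i where ci: "c = \<mu> i" by auto
    define x where "x = U *v axis i 1"
    have "cadj U *v x = axis i 1" using U by (simp add: x_def unitary_def matrix_vector_mul_assoc)
    then have xnz: "x \<noteq> 0" by (metis axis_eq_0_iff matrix_vector_mult_0_right one_neq_zero)
    have "diagm \<mu> *v axis i 1 = \<mu> i *s axis i 1"
      by (simp add: vec_eq_iff diagm_mv axis_def)
    then have "(U ** diagm \<mu> ** cadj U) *v x = \<mu> i *s x"
      using \<open>cadj U *v x = axis i 1\<close>
      by (metis matrix_vector_mul_assoc mv_smult x_def)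
    then show "c \<in> eigs (U ** diagm \<mu> ** cadj U)" using xnz ci by (auto simp: eigs_def)
  qed
qed

lemma quad_conj:
  "cinner z ((U ** diagm \<mu> ** cadj U) *v z) =
     (\<Sum>i\<in>UNIV. \<mu> i * of_real ((cmod ((cadj U *v z)$i))^2))"
proof -
  define w where "w = cadj U *v z"
  have "(U ** diagm \<mu> ** cadj U) *v z = U *v (diagm \<mu> *v w)"
    by (metis matrix_vector_mul_assoc w_def)
  then have "cinner z ((U ** diagm \<mu> ** cadj U) *v z) = cinner w (diagm \<mu> *v w)"
    using cinner_mat[of "cadj U" z "diagm \<mu> *v w"] by (simp add: w_def)
  also have "\<dots> = (\<Sum>i\<in>UNIV. cnj (w$i) * (\<mu> i * w$i))" by (simp add: cinner_def diagm_mv)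
  also have "\<dots> = (\<Sum>i\<in>UNIV. \<mu> i * of_real ((cmod (w$i))^2))"
  proof (intro sum.cong refl)
    fix i
    have "w$i * cnj (w$i) = of_real ((cmod (w$i))^2)" by (metis complex_norm_square)
    then show "cnj (w$i) * (\<mu> i * w$i) = \<mu> i * of_real ((cmod (w$i))^2)"
      by (metis mult.assoc mult.commute)
  qed
  finally show ?thesis by (simp add: w_def)
qed

lemma normsq_conj:
  assumes "unitary U"
  shows "(\<Sum>i\<in>UNIV. (cmod ((cadj U *v z)$i))^2) = (norm z)^2"
proof -
  have "of_real (\<Sum>i\<in>UNIV. (cmod ((cadj U *v z)$i))^2) = cinner (cadj U *v z) (cadj U *v z)"
    by (simp add: cinner_self norm_vec_def L2_set_def sum_nonneg)
  also have "\<dots> = cinner z (U *v (cadj U *v z))" by (simp add: cinner_mat)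
  also have "\<dots> = cinner z z" using assms by (simp add: unitary_def matrix_vector_mul_assoc)
  also have "\<dots> = of_real ((norm z)^2)" by (rule cinner_self)
  finally show ?thesis by (simp only: of_real_eq_iff)
qed

lemma diag_outer: "(cadj U ** outer v ** U)$i$i = of_real ((cmod ((cadj U *v v)$i))^2)"
proof -
  have "cadj U ** outer v ** U = outer (cadj U *v v)" by (simp add: outer_mult)
  moreover have "(cadj U *v v)$i * cnj ((cadj U *v v)$i) = of_real ((cmod ((cadj U *v v)$i))^2)"
    by (metis complex_norm_square)
  ultimately show ?thesis by (simp add: outer_def)
qed

lemma sum_conj:
  "finite K \<Longrightarrow> cadj U ** (\<Sum>k\<in>K. f k) ** U = (\<Sum>k\<in>K. cadj U ** f k ** U)"
  by (induction K rule: finite_induct) (simp_all add: matrix_add_ldistrib matrix_add_rdistrib')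

lemma weights:
  assumes U: "unitary U" and A: "A = U ** diagm (\<lambda>i. of_real (lam i)) ** cadj U"
    and Asum: "A = (\<Sum>k\<in>K. outer (g k))" and fin: "finite K"
  shows "lam i = (\<Sum>k\<in>K. (cmod ((cadj U *v g k)$i))^2)"
proof -
  have "cadj U ** A ** U = (cadj U ** U) ** diagm (\<lambda>i. of_real (lam i)) ** (cadj U ** U)"
    unfolding A by (simp add: matrix_mul_assoc)
  then have "cadj U ** A ** U = diagm (\<lambda>i. of_real (lam i))"
    using U by (simp add: unitary_def)
  moreover have "cadj U ** A ** U = (\<Sum>k\<in>K. cadj U ** outer (g k) ** U)"
    using sum_conj[OF fin] Asum by simp
  ultimately have e: "(\<Sum>k\<in>K. cadj U ** outer (g k) ** U) = diagm (\<lambda>i. of_real (lam i))"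
    by simp
  have "(\<Sum>k\<in>K. cadj U ** outer (g k) ** U)$i$i = (\<Sum>k\<in>K. (cadj U ** outer (g k) ** U)$i$i)"
    by (simp add: sum_component)
  then have "of_real (lam i) = (\<Sum>k\<in>K. (cadj U ** outer (g k) ** U)$i$i)"
    unfolding e by (simp add: diagm_def)
  also have "\<dots> = of_real (\<Sum>k\<in>K. (cmod ((cadj U *v g k)$i))^2)"
    by (simp add: diag_outer)
  finally show ?thesis by (simp only: of_real_eq_iff)
qed

lemma mat_conj:
  assumes "unitary U"
  shows "U ** diagm (\<lambda>i. c) ** cadj U = mat c"
proof -
  have "diagm (\<lambda>i. c) = mat c" by (simp add: diagm_def mat_def)
  moreover have "U ** mat c = mat c ** U"
    by (simp add: matrix_matrix_mult_def mat_def vec_eq_iff if_distrib if_distribR mult.commute cong: if_cong)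
  ultimately show ?thesis using assms
    by (metis matrix_mul_assoc matrix_mul_rid unitary_def)
qed

lemma diagm_diff: "diagm f - diagm g = diagm (\<lambda>i. f i - g i)"
  by (simp add: diagm_def vec_eq_iff)

lemma cinner_cs:
  fixes v z :: "complex^'n"
  shows "(cmod (cinner v z))^2 \<le> (norm v)^2 * (norm z)^2"
proof -
  define a where "a = (\<chi> i. cmod (v$i) :: real^'n)"
  define b where "b = (\<chi> i. cmod (z$i) :: real^'n)"
  have "cmod (cinner v z) \<le> (\<Sum>i\<in>UNIV. cmod (v$i) * cmod (z$i))"
    unfolding cinner_def by (rule order_trans[OF norm_sum]) (simp add: norm_mult)
  also have "\<dots> = a \<bullet> b" by (simp add: a_def b_def inner_vec_def)
  also have "\<dots> \<le> norm a * norm b" by (rule norm_cauchy_schwarz)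
  also have "norm a = norm v" by (simp add: a_def norm_vec_def)
  also have "norm b = norm z" by (simp add: b_def norm_vec_def)
  finally have "cmod (cinner v z) \<le> norm v * norm z" .
  then have "(cmod (cinner v z))^2 \<le> (norm v * norm z)^2"
    by (intro power_mono) auto
  then show ?thesis by (simp add: power_mult_distrib)
qed

lemma spec_pack:
  fixes A :: "complex^'n^'n"
  assumes "cadj A = A"
  obtains U lam where "unitary U" "A = U ** diagm (\<lambda>i. of_real (lam i)) ** cadj U"
  using spectral[OF assms] unitary_def by blast

lemma Re_range: "Re ` range (\<lambda>i. complex_of_real (f i)) = range f"
  by (auto simp: image_image)

lemma lmax_conj:
  assumes "unitary U"
  shows "lambda_max (U ** diagm (\<lambda>i. of_real (f i)) ** cadj U) = Max (range f)"
  using eigs_conj[OF assms] by (simp add: lambda_max_def Re_range)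

lemma lmin_conj:
  assumes "unitary U"
  shows "lambda_min (U ** diagm (\<lambda>i. of_real (f i)) ** cadj U) = Min (range f)"
  using eigs_conj[OF assms] by (simp add: lambda_min_def Re_range)

lemma H_conj:
  assumes U: "unitary U" and A: "A = U ** diagm (\<lambda>i. of_real (lam i)) ** cadj U"
  shows "mat (of_real c) - A = U ** diagm (\<lambda>i. of_real (c - lam i)) ** cadj U"
proof -
  have "mat (of_real c) = U ** diagm (\<lambda>i. of_real c) ** cadj U" using mat_conj[OF U] by simp
  then have "mat (of_real c) - A = U ** (diagm (\<lambda>i. of_real c) - diagm (\<lambda>i. of_real (lam i))) ** cadj U"
    unfolding A by (simp add: matrix_diff_ldistrib matrix_diff_rdistrib)
  then show ?thesis by (simp add: diagm_diff)
qed

lemma det_diagm: "det (diagm (f :: 'n::finite \<Rightarrow> complex)) = (\<Prod>i\<in>UNIV. f i)"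
  by (subst det_diagonal) (auto simp: diagm_def)

lemma det_H:
  assumes "unitary U"
  shows "det (U ** diagm (\<lambda>i. of_real (x i)) ** cadj U) = of_real (\<Prod>i\<in>UNIV. x i)"
  using det_conj[of U] assms by (simp add: unitary_def det_diagm)

lemma det_rank1_real:
  fixes y :: "'n::finite \<Rightarrow> real" and w :: "complex^'n"
  shows "det (diagm (\<lambda>i. of_real (y i)) - outer w) =
    of_real ((\<Prod>l\<in>UNIV. y l) - (\<Sum>i\<in>UNIV. (cmod (w$i))^2 * (\<Prod>l\<in>UNIV-{i}. y l)))"
proof -
  have "diagm (\<lambda>i. of_real (y i)) - outer w =
     (\<chi> i j. (if i = j then of_real (y i) else 0) - (if i \<in> UNIV then w$i * (\<chi> j. cnj (w$j))$j else 0))"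
    by (simp add: diagm_def outer_def vec_eq_iff)
  then have "det (diagm (\<lambda>i. of_real (y i)) - outer w) =
     (\<Prod>l\<in>UNIV. of_real (y l)) - (\<Sum>i\<in>UNIV. w$i * (\<chi> j. cnj (w$j))$i * (\<Prod>l\<in>UNIV-{i}. of_real (y l)))"
    by (simp only: det_diag_rank1)
  also have "\<dots> = of_real ((\<Prod>l\<in>UNIV. y l) - (\<Sum>i\<in>UNIV. (cmod (w$i))^2 * (\<Prod>l\<in>UNIV-{i}. y l)))"
  proof -
    have "w$i * cnj (w$i) = of_real ((cmod (w$i))^2)" for i by (metis complex_norm_square)
    then show ?thesis by (simp add: of_real_prod of_real_sum)
  qed
  finally show ?thesis .
qed

lemma outer_conj:
  assumes "unitary U"
  shows "outer v = U ** outer (cadj U *v v) ** cadj U"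
proof -
  have "U *v (cadj U *v v) = v" using assms by (simp add: unitary_def matrix_vector_mul_assoc)
  then show ?thesis using outer_mult[of U "cadj U *v v"] by simp
qed

lemma cadj_alg_A: "cadj (alg_A v s j) = alg_A v s j"
  by (simp add: alg_A_def cadj_sum)

theorem lemma3p1:
  fixes v :: "nat \<Rightarrow> complex^'n::finite" and m :: nat and \<alpha> :: real and s :: "nat \<Rightarrow> nat"
  assumes "even m"
    and "(\<Sum>i<m. outer (v i)) = mat 1"
    and "\<forall>i<m. (norm (v i))^2 = \<alpha>"
    and "\<alpha> \<le> 1 / (221 * real CARD('n))"
    and "is_run v m \<alpha> s"
  shows "\<forall>j \<le> m div 2.
           alg_u CARD('n) \<alpha> j - lambda_max (alg_A v s j) \<ge> 1/3 \<and>
           cond_num (mat (complex_of_real (alg_u CARD('n) \<alpha> j)) - alg_A v s j) \<le> 3/2"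
proof -
  note ev = assms(1) and tot = assms(2) and nv = assms(3) and small = assms(4) and run = assms(5)
  define d where "d = real CARD('n)"
  define A where "A = alg_A v s"
  define u where "u = alg_u CARD('n) \<alpha>"
  define C where "C j = s ` {..<j}" for j
  have dpos: "d \<ge> 1" by (simp add: d_def)
  have trace: "\<alpha> * real m = d"
  proof -
    have "(of_nat CARD('n) :: complex) = (\<Sum>i\<in>UNIV. (mat 1 :: complex^'n^'n)$i$i)"
      by (simp add: mat_def)
    also have "\<dots> = (\<Sum>i\<in>UNIV. (\<Sum>k<m. outer (v k))$i$i)" by (simp add: tot)
    also have "\<dots> = (\<Sum>i\<in>UNIV. \<Sum>k<m. cnj (v k$i) * v k$i)"
      by (simp add: sum_component outer_def mult.commute)
    also have "\<dots> = (\<Sum>k<m. \<Sum>i\<in>UNIV. cnj (v k$i) * v k$i)" by (rule sum.swap)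
    also have "\<dots> = (\<Sum>k<m. cinner (v k) (v k))" by (simp add: cinner_def)
    also have "\<dots> = (\<Sum>k<m. of_real \<alpha>)" using nv by (simp add: cinner_self)
    also have "\<dots> = of_real (\<alpha> * real m)" by simp
    finally have e: "(of_nat CARD('n) :: complex) = of_real (\<alpha> * real m)" .
    have "real CARD('n) = \<alpha> * real m" using e by (metis of_real_eq_iff of_real_of_nat_eq)
    then show ?thesis by (simp add: d_def)
  qed
  have mpos: "m > 0" using trace dpos by (cases m) auto
  have apos: "\<alpha> > 0" using trace dpos mpos by (smt (verit) mult_nonpos_nonneg of_nat_0_le_iff)
  have alpha_eq: "\<alpha> = d / real m" using trace mpos by (simp add: field_simps)
  have dm: "d * d * 221 \<le> real m"
  proof -
    have "d / real m \<le> 1 / (221 * d)" using small alpha_eq by (simp add: d_def)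
    then show ?thesis using mpos dpos by (simp add: field_simps)
  qed
  have a_small: "\<alpha> \<le> 1 / 221"
  proof -
    have h: "1 / (221 * d) \<le> 1 / 221" using dpos by (simp add: field_simps)
    have "\<alpha> \<le> 1 / (221 * d)" using small by (simp add: d_def)
    then show ?thesis using h by (rule order_trans)
  qed
  have u_eq: "u j = 1/2 + real j / real m" for j
    using dpos by (simp add: u_def alg_u_def alpha_eq d_def)
  have u_Suc: "u (Suc j) = u j + 1 / real m" for j
    by (simp add: u_eq add_divide_distrib)
  have du: "d * u j = d / 2 + real j * \<alpha>" for j
    using dpos by (simp add: u_def alg_u_def d_def field_simps)
  have runj: "s j < m \<and> s j \<notin> s ` {..<j} \<and>
        (\<forall>k < m. k \<notin> s ` {..<j} \<longrightarrow>
           Re (det (mat (complex_of_real (u (Suc j))) - A j - outer (v k)))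
           \<le> Re (det (mat (complex_of_real (u (Suc j))) - A j - outer (v (s j)))))"
    if "j < m div 2" for j
    using run that unfolding is_run_def by (simp add: A_def u_def)
  have injC: "inj_on s {..<J}" if "J \<le> m div 2" for J
  proof (rule inj_onI)
    fix a b assume ab: "a \<in> {..<J}" "b \<in> {..<J}" "s a = s b"
    show "a = b"
    proof (rule ccontr)
      assume "a \<noteq> b"
      then consider "a < b" | "b < a" by linarith
      then show False
      proof cases
        case 1
        then have "s b \<notin> s ` {..<b}" using runj[of b] ab that by auto
        moreover have "s a \<in> s ` {..<b}" using 1 by auto
        ultimately show False using ab(3) by simp
      next
        case 2
        then have "s a \<notin> s ` {..<a}" using runj[of a] ab that by auto
        moreover have "s b \<in> s ` {..<a}" using 2 by auto
        ultimately show False using ab(3) by simp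
      qed
    qed
  qed
  have Csub: "C J \<subseteq> {..<m}" if "J \<le> m div 2" for J
    using runj that by (auto simp: C_def)
  have cardC: "card (C J) = J" if "J \<le> m div 2" for J
    using injC[OF that] by (simp add: C_def card_image)
  have finC: "finite (C J)" for J by (simp add: C_def)
  have Asum: "A J = (\<Sum>k\<in>C J. outer (v k))" if "J \<le> m div 2" for J
    using injC[OF that] by (simp add: A_def alg_A_def C_def sum.reindex)
  have herm: "cadj (A j) = A j" for j by (simp add: A_def cadj_alg_A)
  define ell where "ell = 5.625 * d * d / (real m * real m)"
  have ell0: "ell \<ge> 0" by (simp add: ell_def)
  have jell: "real j * ell \<le> 0.0128" if "j \<le> m div 2" for j
  proof -
    have "real j \<le> real m / 2" using that by linarith
    then have "real j * ell \<le> real m / 2 * ell" using ell0 by (intro mult_right_mono) auto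
    also have "\<dots> = 2.8125 * (d * d) / real m" using mpos by (simp add: ell_def field_simps)
    also have "\<dots> \<le> 2.8125 / 221"
      using dm mpos by (simp add: field_simps)
    finally show ?thesis by simp
  qed
  define Inv where "Inv j \<longleftrightarrow> lambda_max (A j) < u j \<and>
      1 - real j * ell \<le> 2 ^ CARD('n) * Re (det (mat (complex_of_real (u j)) - A j))" for j
  have decomp: "\<exists>U lam. unitary U \<and> A j = U ** diagm (\<lambda>i. of_real (lam i)) ** cadj U" for j
    using spec_pack[OF herm[of j]] by metis
  have Wone: "(\<Sum>k<m. (cmod ((cadj U *v v k)$i))^2) = 1" if U: "unitary U" for U i
  proof -
    have "mat 1 = U ** diagm (\<lambda>i. of_real 1) ** cadj U" using mat_conj[OF U, of 1] by simp
    from weights[OF U this, where K="{..<m}" and g=v and i=i] tot show ?thesis by simp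
  qed
  have Walpha: "(\<Sum>i\<in>UNIV. (cmod ((cadj U *v v k)$i))^2) = \<alpha>" if U: "unitary U" "k < m" for U k
    using normsq_conj[OF U(1)] nv U(2) by simp
  have lam_sum: "(\<Sum>i\<in>UNIV. lam i) = real J * \<alpha>"
    if U: "unitary U" "A J = U ** diagm (\<lambda>i. of_real (lam i)) ** cadj U" and J: "J \<le> m div 2" for U lam J
  proof -
    have "lam i = (\<Sum>k\<in>C J. (cmod ((cadj U *v v k)$i))^2)" for i
      using weights[OF U(1) U(2) Asum[OF J] finC] .
    then have "(\<Sum>i\<in>UNIV. lam i) = (\<Sum>k\<in>C J. \<Sum>i\<in>UNIV. (cmod ((cadj U *v v k)$i))^2)"
      by (simp add: sum.swap[of _ "C J"])
    also have "\<dots> = (\<Sum>k\<in>C J. \<alpha>)"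
      using Walpha[OF U(1)] Csub[OF J] by (intro sum.cong) auto
    also have "\<dots> = real J * \<alpha>" using cardC[OF J] by simp
    finally show ?thesis .
  qed
  have bounds: "0.4 \<le> u j - lam i \<and> u j - lam i \<le> 0.6"
    if I: "Inv j" and J: "j \<le> m div 2" and U: "unitary U"
      and Ad: "A j = U ** diagm (\<lambda>i. of_real (lam i)) ** cadj U" for j U lam i
  proof -
    define y where "y i = 2 * (u j - lam i)" for i
    have lmax: "lambda_max (A j) = Max (range lam)" using lmax_conj[OF U] Ad by simp
    have ypos: "\<forall>i. y i > 0"
    proof
      fix i
      have "lam i \<le> Max (range lam)" by simp
      then show "y i > 0" using I lmax by (simp add: Inv_def y_def)
    qed
    have ysum: "(\<Sum>i\<in>UNIV. y i) = real CARD('n)"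
    proof -
      have "(\<Sum>i\<in>UNIV. y i) = 2 * (d * u j) - 2 * (\<Sum>i\<in>UNIV. lam i)"
        by (simp add: y_def sum_subtractf sum_distrib_left d_def)
      also have "\<dots> = d" using du[of j] lam_sum[OF U Ad J] by simp
      finally show ?thesis by (simp add: d_def)
    qed
    have "det (mat (complex_of_real (u j)) - A j) = det (U ** diagm (\<lambda>i. of_real (u j - lam i)) ** cadj U)"
      using H_conj[OF U Ad, of "u j"] by (simp only:)
    also have "\<dots> = of_real (\<Prod>i\<in>UNIV. u j - lam i)" by (rule det_H[OF U])
    finally have "det (mat (complex_of_real (u j)) - A j) = of_real (\<Prod>i\<in>UNIV. u j - lam i)" .
    then have Re_det: "Re (det (mat (complex_of_real (u j)) - A j)) = (\<Prod>i\<in>UNIV. u j - lam i)"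
      by (metis Re_complex_of_real)
    have "1 - real j * ell \<le> 2 ^ CARD('n) * Re (det (mat (complex_of_real (u j)) - A j))"
      using I unfolding Inv_def by blast
    then have "1 - real j * ell \<le> 2 ^ CARD('n) * (\<Prod>i\<in>UNIV. u j - lam i)"
      unfolding Re_det .
    also have "2 ^ CARD('n) * (\<Prod>i\<in>UNIV. u j - lam i) = (\<Prod>i\<in>UNIV. y i)"
    proof -
      have "(\<Prod>i\<in>UNIV. y i) = (\<Prod>i\<in>(UNIV::'n set). 2) * (\<Prod>i\<in>UNIV. u j - lam i)"
        unfolding y_def by (rule prod.distrib)
      then show ?thesis by simp
    qed
    finally have "(\<Prod>i\<in>UNIV. y i) \<ge> 0.9872" using jell[OF J] by simp
    from bound_lemma[OF ypos ysum this, of i] show ?thesis by (simp add: y_def)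
  qed

  have unit1: "unitary (mat 1 :: complex^'n^'n)" by (simp add: unitary_def)
  have Inv0: "Inv 0"
  proof -
    have A0: "A 0 = mat 1 ** diagm (\<lambda>i. of_real ((\<lambda>i. 0::real) i)) ** cadj (mat 1)"
      using mat_conj[OF unit1, of 0] by (simp add: A_def alg_A_def)
    have "lambda_max (A 0) = Max (range (\<lambda>i. 0::real))"
      unfolding A0 using lmax_conj[OF unit1, of "\<lambda>i. 0"] by simp
    then have l0: "lambda_max (A 0) = 0" by simp
    have "det (mat (complex_of_real (u 0)) - A 0) = det (mat 1 ** diagm (\<lambda>i::'n. of_real (u 0 - 0)) ** cadj (mat 1))"
      using H_conj[OF unit1 A0, of "u 0"] by (simp only:)
    also have "\<dots> = of_real (\<Prod>i\<in>(UNIV::'n set). u 0 - 0)" by (rule det_H[OF unit1])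
    finally have "Re (det (mat (complex_of_real (u 0)) - A 0)) = (1/2) ^ CARD('n)"
      by (simp add: u_eq)
    moreover have "(2::real) ^ CARD('n) * (1/2) ^ CARD('n) = 1"
      by (simp add: power_mult_distrib[symmetric])
    ultimately show ?thesis using l0 by (simp add: Inv_def u_eq)
  qed
  have step: "Inv (Suc j)" if I: "Inv j" and J: "j < m div 2" for j
  proof -
    have J': "j \<le> m div 2" using J by simp
    have JS: "Suc j \<le> m div 2" using J by simp
    obtain U lam where U: "unitary U" and Ad: "A j = U ** diagm (\<lambda>i. of_real (lam i)) ** cadj U"
      using decomp by blast
    define x where "x i = u j - lam i" for i
    have xb: "\<forall>i. 0.4 \<le> x i \<and> x i \<le> 0.6"
      using bounds[OF I J' U Ad] by (simp add: x_def)
    define W where "W k i = (cmod ((cadj U *v v k)$i))^2" for k i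
    define R where "R = {..<m} - C j"
    define G where "G k = (\<Prod>l\<in>UNIV. x l + 1 / real m) -
                 (\<Sum>i\<in>UNIV. W k i * (\<Prod>l\<in>UNIV-{i}. x l + 1 / real m))" for k
    have yx: "u (Suc j) - lam l = x l + 1 / real m" for l by (simp add: x_def u_Suc)
    have detk: "det (mat (complex_of_real (u (Suc j))) - A j - outer (v k)) = of_real (G k)" for k
    proof -
      have "mat (complex_of_real (u (Suc j))) - A j - outer (v k) =
          U ** diagm (\<lambda>i. of_real (u (Suc j) - lam i)) ** cadj U - U ** outer (cadj U *v v k) ** cadj U"
        using H_conj[OF U Ad, of "u (Suc j)"] outer_conj[OF U, of "v k"] by simp
      also have "\<dots> = U ** (diagm (\<lambda>i. of_real (u (Suc j) - lam i)) - outer (cadj U *v v k)) ** cadj U"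
        by (simp add: matrix_diff_ldistrib matrix_diff_rdistrib)
      finally have "det (mat (complex_of_real (u (Suc j))) - A j - outer (v k)) =
          det (diagm (\<lambda>i. of_real (u (Suc j) - lam i)) - outer (cadj U *v v k))"
        using det_conj[of U] U by (simp add: unitary_def)
      also have "\<dots> = of_real (G k)"
        unfolding det_rank1_real by (simp add: G_def W_def yx)
      finally show ?thesis .
    qed
    have rj: "s j < m \<and> s j \<notin> s ` {..<j} \<and>
        (\<forall>k < m. k \<notin> s ` {..<j} \<longrightarrow>
           Re (det (mat (complex_of_real (u (Suc j))) - A j - outer (v k)))
           \<le> Re (det (mat (complex_of_real (u (Suc j))) - A j - outer (v (s j)))))"
      by (rule runj[OF J])
    have greedy: "\<forall>k\<in>R. G k \<le> G (s j)"
      using rj by (simp add: R_def C_def detk)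
    have ks: "s j \<in> R" using rj by (simp add: R_def C_def)
    have finR: "finite R" by (simp add: R_def)
    have cardR: "card R = m - j"
      using Csub[OF J'] cardC[OF J'] finC by (simp add: R_def card_Diff_subset)
    have lamW: "lam i = (\<Sum>k\<in>C j. W k i)" for i
      unfolding W_def by (rule weights[OF U Ad Asum[OF J'] finC])
    have Wsum: "\<forall>i. (\<Sum>k\<in>R. W k i) = 1 - u j + x i"
    proof
      fix i
      have "(\<Sum>k\<in>R. W k i) = (\<Sum>k<m. W k i) - (\<Sum>k\<in>C j. W k i)"
        unfolding R_def using Csub[OF J'] by (simp add: sum_diff)
      also have "(\<Sum>k<m. W k i) = 1" unfolding W_def by (rule Wone[OF U])
      finally show "(\<Sum>k\<in>R. W k i) = 1 - u j + x i" by (simp add: lamW[symmetric] x_def)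
    qed
    have xs: "(\<Sum>i\<in>UNIV. x i) = real CARD('n) / 2"
    proof -
      have "(\<Sum>i\<in>UNIV. x i) = d * u j - (\<Sum>i\<in>UNIV. lam i)"
        by (simp add: x_def sum_subtractf d_def)
      also have "\<dots> = d / 2" using du[of j] lam_sum[OF U Ad J'] by simp
      finally show ?thesis by (simp add: d_def)
    qed
    have jm: "2 * j + 2 \<le> m" using J ev by (auto elim!: evenE)
    have dm': "real CARD('n) * real CARD('n) * 221 \<le> real m" using dm by (simp add: d_def)
    have Gdef: "\<forall>k. G k = (\<Prod>l\<in>UNIV. x l + 1 / real m) -
                 (\<Sum>i\<in>UNIV. W k i * (\<Prod>l\<in>UNIV-{i}. x l + 1 / real m))"
      by (simp add: G_def)
    have Gks: "G (s j) \<ge> (\<Prod>l\<in>UNIV. x l) * (1 - ell)"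
      using step_real[OF mpos jm dm' xb xs u_eq finR cardR Wsum ks greedy Gdef]
      by (simp add: ell_def d_def)
    have "det (mat (complex_of_real (u j)) - A j) = det (U ** diagm (\<lambda>i. of_real (u j - lam i)) ** cadj U)"
      using H_conj[OF U Ad, of "u j"] by (simp only:)
    also have "\<dots> = of_real (\<Prod>i\<in>UNIV. x i)" unfolding x_def by (rule det_H[OF U])
    finally have "Re (det (mat (complex_of_real (u j)) - A j)) = (\<Prod>i\<in>UNIV. x i)"
      by (metis Re_complex_of_real)
    then have prevX: "1 - real j * ell \<le> 2 ^ CARD('n) * (\<Prod>i\<in>UNIV. x i)"
      using I unfolding Inv_def by simp
    have ASuc: "A (Suc j) = A j + outer (v (s j))" by (simp add: A_def alg_A_def)
    have detS: "Re (det (mat (complex_of_real (u (Suc j))) - A (Suc j))) = G (s j)"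
      using detk[of "s j"] by (simp add: ASuc diff_diff_eq)
    have ell1: "ell \<le> 1"
    proof -
      have "real 1 * ell \<le> 0.0128" using jell[of 1] JS by simp
      then show ?thesis by simp
    qed
    have jell0: "1 - real j * ell \<ge> 0" using jell[OF J'] by simp
    have "(1 - real j * ell) * (1 - ell) \<le> 2 ^ CARD('n) * (\<Prod>i\<in>UNIV. x i) * (1 - ell)"
      using prevX ell1 by (intro mult_right_mono) auto
    also have "\<dots> = 2 ^ CARD('n) * ((\<Prod>i\<in>UNIV. x i) * (1 - ell))" by simp
    also have "\<dots> \<le> 2 ^ CARD('n) * G (s j)" using Gks by (intro mult_left_mono) auto
    finally have "(1 - real j * ell) * (1 - ell) \<le> 2 ^ CARD('n) * G (s j)" .
    moreover have "1 - real (Suc j) * ell \<le> (1 - real j * ell) * (1 - ell)"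
    proof -
      have "(1 - real j * ell) * (1 - ell) = 1 - real (Suc j) * ell + real j * ell * ell"
        by (simp add: algebra_simps)
      moreover have "real j * ell * ell \<ge> 0" using ell0 by simp
      ultimately show ?thesis by linarith
    qed
    ultimately have detpart: "1 - real (Suc j) * ell \<le> 2 ^ CARD('n) * Re (det (mat (complex_of_real (u (Suc j))) - A (Suc j)))"
      using detS by simp
    have lamb: "lam l \<le> u j - 0.4" for l
    proof -
      have "0.4 \<le> x l" using xb by blast
      then show ?thesis unfolding x_def by linarith
    qed
    have Mx: "Max (range lam) \<le> u j - 0.4" using lamb by (simp add: Max_le_iff)
    obtain U2 lam2 where U2: "unitary U2" and Ad2: "A (Suc j) = U2 ** diagm (\<lambda>i. of_real (lam2 i)) ** cadj U2"
      using decomp by blast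
    have lam2b: "lam2 i \<le> Max (range lam) + \<alpha>" for i
    proof -
      define z where "z = U2 *v axis i 1"
      have Uz: "cadj U2 *v z = axis i 1" using U2 by (simp add: z_def unitary_def matrix_vector_mul_assoc)
      have nz: "(norm z)^2 = 1"
      proof -
        have "(\<Sum>l\<in>UNIV. (cmod ((cadj U2 *v z)$l))^2) = 1"
          unfolding Uz by (simp add: axis_def if_distrib[of "\<lambda>x. (cmod x)^2"] cong: if_cong)
        then show ?thesis using normsq_conj[OF U2, of z] by simp
      qed
      have q2: "cinner z (A (Suc j) *v z) = of_real (lam2 i)"
      proof -
        have "cinner z (A (Suc j) *v z) = (\<Sum>l\<in>UNIV. of_real (lam2 l) * of_real ((cmod ((cadj U2 *v z)$l))^2))"
          unfolding Ad2 by (rule quad_conj)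
        also have "\<dots> = (\<Sum>l\<in>UNIV. if l = i then of_real (lam2 l) else 0)"
          unfolding Uz by (intro sum.cong refl) (simp add: axis_def)
        also have "\<dots> = of_real (lam2 i)" by simp
        finally show ?thesis .
      qed
      define W' where "W' l = (cmod ((cadj U *v z)$l))^2" for l
      have W'sum: "(\<Sum>l\<in>UNIV. W' l) = 1" using normsq_conj[OF U, of z] nz by (simp add: W'_def)
      have q1: "cinner z (A j *v z) = of_real (\<Sum>l\<in>UNIV. lam l * W' l)"
        unfolding Ad quad_conj by (simp add: W'_def)
      have "cinner z (A (Suc j) *v z) = cinner z (A j *v z) + cinner z (outer (v (s j)) *v z)"
        by (simp add: ASuc matrix_vector_mult_add_rdistrib cinner_add_right)
      also have "\<dots> = of_real ((\<Sum>l\<in>UNIV. lam l * W' l) + (cmod (cinner (v (s j)) z))^2)"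
        by (simp add: q1 cinner_outer)
      finally have e: "lam2 i = (\<Sum>l\<in>UNIV. lam l * W' l) + (cmod (cinner (v (s j)) z))^2"
        using q2 by (metis of_real_eq_iff)
      have "(\<Sum>l\<in>UNIV. lam l * W' l) \<le> (\<Sum>l\<in>UNIV. Max (range lam) * W' l)"
        by (intro sum_mono mult_right_mono) (auto simp: W'_def)
      also have "\<dots> = Max (range lam)" by (simp add: sum_distrib_left[symmetric] W'sum)
      finally have s1: "(\<Sum>l\<in>UNIV. lam l * W' l) \<le> Max (range lam)" .
      have "(cmod (cinner (v (s j)) z))^2 \<le> (norm (v (s j)))^2 * (norm z)^2" by (rule cinner_cs)
      also have "\<dots> = \<alpha>" using nv rj nz by simp
      finally show ?thesis using e s1 by linarith
    qed
    have "lam2 i < u (Suc j)" for i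
    proof -
      have "lam2 i \<le> u j - 0.4 + \<alpha>" using lam2b[of i] Mx by linarith
      moreover have "u j < u (Suc j)" using u_Suc mpos by simp
      ultimately show ?thesis using a_small by linarith
    qed
    then have "Max (range lam2) < u (Suc j)" by (simp add: Max_less_iff)
    then have "lambda_max (A (Suc j)) < u (Suc j)" using lmax_conj[OF U2] Ad2 by simp
    then show ?thesis using detpart by (simp add: Inv_def)
  qed
  have Inv_all: "j \<le> m div 2 \<longrightarrow> Inv j" for j
  proof (induction j)
    case 0 show ?case using Inv0 by simp
  next
    case (Suc j) then show ?case using step by simp
  qed
  show ?thesis
  proof (intro allI impI)
    fix j assume J: "j \<le> m div 2"
    have I: "Inv j" using Inv_all J by simp
    obtain U lam where U: "unitary U" and Ad: "A j = U ** diagm (\<lambda>i. of_real (lam i)) ** cadj U"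
      using decomp by blast
    define x where "x i = u j - lam i" for i
    have xb: "0.4 \<le> x i \<and> x i \<le> 0.6" for i
      using bounds[OF I J U Ad] by (simp add: x_def)
    have "lambda_max (A j) = Max (range lam)" using lmax_conj[OF U] Ad by simp
    also have "\<dots> \<le> u j - 0.4"
    proof -
      have "lam l \<le> u j - 0.4" for l
      proof -
        have "0.4 \<le> x l" using xb by blast
        then show ?thesis unfolding x_def by linarith
      qed
      then show ?thesis by (simp add: Max_le_iff)
    qed
    finally have c1: "u j - lambda_max (A j) \<ge> 1/3" by simp
    have H: "mat (complex_of_real (u j)) - A j = U ** diagm (\<lambda>i. of_real (x i)) ** cadj U"
      using H_conj[OF U Ad, of "u j"] by (simp add: x_def)
    have lM: "lambda_max (mat (complex_of_real (u j)) - A j) = Max (range x)"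
      unfolding H by (rule lmax_conj[OF U])
    have lm: "lambda_min (mat (complex_of_real (u j)) - A j) = Min (range x)"
      unfolding H by (rule lmin_conj[OF U])
    have xu: "\<forall>i. x i \<le> 0.6" using xb by blast
    have xl: "\<forall>i. 0.4 \<le> x i" using xb by blast
    have M6: "Max (range x) \<le> 0.6" using xu by (intro Max.boundedI) auto
    have m4: "Min (range x) \<ge> 0.4" using xl by (intro Min.boundedI) auto
    have "cond_num (mat (complex_of_real (u j)) - A j) = Max (range x) / Min (range x)"
      by (simp add: cond_num_def lM lm)
    also have "\<dots> \<le> 0.6 / Min (range x)"
    proof -
      have m0: "0 \<le> Min (range x)" using m4 by linarith
      show ?thesis using M6 m0 by (rule divide_right_mono)
    qed
    also have "\<dots> \<le> 0.6 / 0.4"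
    proof -
      have c0: "(0::real) \<le> 0.6" by simp
      have pos: "0 < Min (range x) * 0.4"
      proof -
        have mp: "0 < Min (range x)" using m4 by linarith
        show ?thesis by (rule mult_pos_pos[OF mp]) simp
      qed
      show ?thesis by (rule divide_left_mono[OF m4 c0 pos])
    qed
    finally have c2: "cond_num (mat (complex_of_real (u j)) - A j) \<le> 3/2" by simp
    show "alg_u CARD('n) \<alpha> j - lambda_max (alg_A v s j) \<ge> 1/3 \<and>
           cond_num (mat (complex_of_real (alg_u CARD('n) \<alpha> j)) - alg_A v s j) \<le> 3/2"
      using c1 c2 by (simp add: A_def u_def)
  qed
qed

end
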